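(* If $G$ is a graph of order $n\ge 7$ having at least one vertex $u$ with $3\le\deg(u)\le n-4$, then $\beta_p(G)\le n-3$.
   Context: All graphs are finite, simple, undirected and connected. For a partition $\Pi=\{S_1,\dots,S_m\}$ of $V(G)$, $r(u|\Pi)=(d(u,S_1),\dots,d(u,S_m))$ with $d(u,S)=\min_{w\in S}d(u,w)$; $\Pi$ is locating if $r(u|\Pi)\ne r(v|\Pi)$ for all distinct $u,v$; $\beta_p(G)$ is the minimum size of a locating partition. *)

theory Defs
  imports Main
begin

definition simple_graph :: "'a set \<Rightarrow> ('a \<Rightarrow> 'a \<Rightarrow> bool) \<Rightarrow> bool" where
  "simple_graph V E \<longleftrightarrow> finite V \<and> V \<noteq> {} \<and>
     (\<forall>u v. E u v \<longrightarrow> u \<in> V \<and> v \<in> V) \<and>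
     (\<forall>u v. E u v \<longrightarrow> E v u) \<and> (\<forall>u. \<not> E u u)"

fun is_walk :: "('a \<Rightarrow> 'a \<Rightarrow> bool) \<Rightarrow> 'a list \<Rightarrow> bool" where
  "is_walk E [] = False"
| "is_walk E [x] = True"
| "is_walk E (x # y # xs) = (E x y \<and> is_walk E (y # xs))"

definition walk_between :: "'a set \<Rightarrow> ('a \<Rightarrow> 'a \<Rightarrow> bool) \<Rightarrow> 'a \<Rightarrow> 'a \<Rightarrow> 'a list \<Rightarrow> bool" where
  "walk_between V E u v xs \<longleftrightarrow> is_walk E xs \<and> set xs \<subseteq> V \<and> hd xs = u \<and> last xs = v"

definition connected_graph :: "'a set \<Rightarrow> ('a \<Rightarrow> 'a \<Rightarrow> bool) \<Rightarrow> bool" where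
  "connected_graph V E \<longleftrightarrow> simple_graph V E \<and>
     (\<forall>u\<in>V. \<forall>v\<in>V. \<exists>xs. walk_between V E u v xs)"

definition gdist :: "'a set \<Rightarrow> ('a \<Rightarrow> 'a \<Rightarrow> bool) \<Rightarrow> 'a \<Rightarrow> 'a \<Rightarrow> nat" where
  "gdist V E u v = (LEAST k. \<exists>xs. walk_between V E u v xs \<and> length xs = Suc k)"

definition set_dist :: "'a set \<Rightarrow> ('a \<Rightarrow> 'a \<Rightarrow> bool) \<Rightarrow> 'a \<Rightarrow> 'a set \<Rightarrow> nat" where
  "set_dist V E u S = Min ((\<lambda>w. gdist V E u w) ` S)"

definition degree :: "'a set \<Rightarrow> ('a \<Rightarrow> 'a \<Rightarrow> bool) \<Rightarrow> 'a \<Rightarrow> nat" where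
  "degree V E u = card {v \<in> V. E u v}"

definition is_partition :: "'a set \<Rightarrow> 'a set set \<Rightarrow> bool" where
  "is_partition V P \<longleftrightarrow> (\<Union>P = V) \<and> {} \<notin> P \<and>
     (\<forall>S\<in>P. \<forall>T\<in>P. S \<noteq> T \<longrightarrow> S \<inter> T = {})"

text \<open>Locating: distinct vertices have distinct representation vectors, i.e. some class
  distinguishes them (the ordering of the classes is irrelevant).\<close>
definition locating_partition :: "'a set \<Rightarrow> ('a \<Rightarrow> 'a \<Rightarrow> bool) \<Rightarrow> 'a set set \<Rightarrow> bool" where
  "locating_partition V E P \<longleftrightarrow> is_partition V P \<and>
     (\<forall>u\<in>V. \<forall>v\<in>V. u \<noteq> v \<longrightarrow>
        (\<exists>S\<in>P. set_dist V E u S \<noteq> set_dist V E v S))"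

definition partition_dim :: "'a set \<Rightarrow> ('a \<Rightarrow> 'a \<Rightarrow> bool) \<Rightarrow> nat" where
  "partition_dim V E = (LEAST m. \<exists>P. locating_partition V E P \<and> card P = m)"

end

theory Submission
  imports Defs
begin

lemma three_elems:
  assumes "3 \<le> card A"
  obtains a b c where "a \<in> A" "b \<in> A" "c \<in> A" "a \<noteq> b" "a \<noteq> c" "b \<noteq> c"
proof -
  obtain T where T: "T \<subseteq> A" "card T = 3" using obtain_subset_with_card_n[OF assms] by metis
  then obtain a b c where "T = {a,b,c}" "a \<noteq> b" "a \<noteq> c" "b \<noteq> c"
    by (auto simp: numeral_3_eq_3 card_Suc_eq)
  with T that show thesis by blast
qed

lemma gdist_walk:
  assumes "connected_graph V E" "a \<in> V" "b \<in> V"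
  shows "\<exists>xs. walk_between V E a b xs \<and> length xs = Suc (gdist V E a b)"
proof -
  obtain xs where xs: "walk_between V E a b xs"
    using assms unfolding connected_graph_def by blast
  then have "xs \<noteq> []" unfolding walk_between_def by auto
  then obtain k where "length xs = Suc k" by (cases xs) auto
  with xs have "\<exists>k xs. walk_between V E a b xs \<and> length xs = Suc k" by blast
  then show ?thesis unfolding gdist_def by (rule LeastI_ex)
qed

lemma gdist_0:
  assumes "connected_graph V E" "a \<in> V" "b \<in> V" "gdist V E a b = 0"
  shows "a = b"
proof -
  obtain xs where "walk_between V E a b xs" "length xs = Suc 0"
    using gdist_walk[OF assms(1-3)] assms(4) by auto
  then show ?thesis unfolding walk_between_def
    by (cases xs) auto
qed

lemma gdist_1:
  assumes "connected_graph V E" "a \<in> V" "b \<in> V" "gdist V E a b = 1"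
  shows "E a b"
proof -
  obtain xs where "walk_between V E a b xs" "length xs = Suc (Suc 0)"
    using gdist_walk[OF assms(1-3)] assms(4) by auto
  then obtain p q where "xs = [p,q]" by (auto simp: length_Suc_conv)
  then show ?thesis using \<open>walk_between V E a b xs\<close> unfolding walk_between_def by auto
qed

lemma gdist_refl:
  assumes "a \<in> V"
  shows "gdist V E a a = 0"
proof -
  have "walk_between V E a a [a] \<and> length [a] = Suc 0"
    using assms by (simp add: walk_between_def)
  then have "gdist V E a a \<le> 0" unfolding gdist_def by (intro Least_le) blast
  then show ?thesis by simp
qed

lemma gdist_adj:
  assumes "connected_graph V E" "E a b"
  shows "gdist V E a b = 1"
proof -
  have sg: "simple_graph V E" using assms(1) by (simp add: connected_graph_def)
  then have ab: "a \<in> V" "b \<in> V" "a \<noteq> b" using assms(2) unfolding simple_graph_def by metis+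
  have "walk_between V E a b [a,b] \<and> length [a,b] = Suc 1"
    using ab assms(2) by (simp add: walk_between_def)
  then have "gdist V E a b \<le> 1" unfolding gdist_def by (intro Least_le) blast
  moreover have "gdist V E a b \<noteq> 0" using gdist_0[OF assms(1) ab(1,2)] ab(3) by blast
  ultimately show ?thesis by simp
qed

lemma sd_in:
  assumes "finite S" "S \<subseteq> V" "v \<in> S"
  shows "set_dist V E v S = 0"
proof -
  have "v \<in> V" using assms by blast
  then have "gdist V E v v = 0" by (rule gdist_refl)
  then have "0 \<in> (\<lambda>w. gdist V E v w) ` S" using assms(3) by (metis image_eqI)
  then have "Min ((\<lambda>w. gdist V E v w) ` S) \<le> 0" using assms(1) by (intro Min_le) auto
  then show ?thesis unfolding set_dist_def by simp
qed

lemma sd_notin: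
  assumes "connected_graph V E" "finite S" "S \<subseteq> V" "S \<noteq> {}" "w \<in> V" "w \<notin> S"
  shows "set_dist V E w S \<noteq> 0"
proof
  assume a: "set_dist V E w S = 0"
  have "finite ((\<lambda>x. gdist V E w x) ` S)" "(\<lambda>x. gdist V E w x) ` S \<noteq> {}"
    using assms(2,4) by auto
  then have "Min ((\<lambda>x. gdist V E w x) ` S) \<in> (\<lambda>x. gdist V E w x) ` S" by (rule Min_in)
  then obtain s where s: "s \<in> S" "gdist V E w s = 0" using a unfolding set_dist_def by (metis imageE)
  have "s \<in> V" using s(1) assms(3) by blast
  then have "w = s" using gdist_0[OF assms(1) assms(5)] s(2) by blast
  then show False using s(1) assms(6) by simp
qed

lemma sd_single:
  "set_dist V E v {u} = gdist V E v u"
  by (simp add: set_dist_def)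

theorem corollary11:
  fixes V :: "'a set" and E :: "'a \<Rightarrow> 'a \<Rightarrow> bool" and n :: nat
  assumes "connected_graph V E"
    and "card V = n" and "n \<ge> 7"
    and "\<exists>u\<in>V. 3 \<le> degree V E u \<and> degree V E u \<le> n - 4"
  shows "partition_dim V E \<le> n - 3"
proof -
  have sg: "simple_graph V E" using assms(1) by (simp add: connected_graph_def)
  have fin: "finite V" using sg by (simp add: simple_graph_def)
  have Ein: "\<And>a b. E a b \<Longrightarrow> a \<in> V \<and> b \<in> V" using sg by (simp add: simple_graph_def)
  have irr: "\<And>a. \<not> E a a" using sg by (simp add: simple_graph_def)
  obtain u where u: "u \<in> V" "3 \<le> degree V E u" "degree V E u \<le> n - 4" using assms(4) by blast
  define N where "N = {v \<in> V. E u v}"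
  have cN: "3 \<le> card N" using u(2) by (simp add: N_def degree_def)
  obtain x1 x2 x3 where x: "x1 \<in> N" "x2 \<in> N" "x3 \<in> N" "x1 \<noteq> x2" "x1 \<noteq> x3" "x2 \<noteq> x3"
    using three_elems[OF cN] by blast
  define M where "M = V - insert u N"
  have "card (insert u N) = Suc (card N)"
    using fin irr by (simp add: N_def)
  moreover have "insert u N \<subseteq> V" using u(1) by (auto simp: N_def)
  ultimately have "card M = n - Suc (card N)"
    using fin assms(2) unfolding M_def by (metis card_Diff_subset finite_subset)
  then have cM: "3 \<le> card M" using u(3) assms(3) by (simp add: N_def degree_def)
  obtain y1 y2 y3 where y: "y1 \<in> M" "y2 \<in> M" "y3 \<in> M" "y1 \<noteq> y2" "y1 \<noteq> y3" "y2 \<noteq> y3"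
    using three_elems[OF cM] by blast
  define X where "X = {x1,x2,x3,y1,y2,y3}"
  define P where "P = {{x1,y1},{x2,y2},{x3,y3}} \<union> (\<lambda>v. {v}) ` (V - X)"
  have xV: "x1 \<in> V" "x2 \<in> V" "x3 \<in> V" "E u x1" "E u x2" "E u x3" using x by (auto simp: N_def)
  have yV: "y1 \<in> V" "y2 \<in> V" "y3 \<in> V" "\<not> E u y1" "\<not> E u y2" "\<not> E u y3"
    "y1 \<noteq> u" "y2 \<noteq> u" "y3 \<noteq> u" using y by (auto simp: M_def N_def)
  have dxy: "x1 \<noteq> y1" "x1 \<noteq> y2" "x1 \<noteq> y3" "x2 \<noteq> y1" "x2 \<noteq> y2" "x2 \<noteq> y3"
     "x3 \<noteq> y1" "x3 \<noteq> y2" "x3 \<noteq> y3" using xV yV by metis+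
  have uX: "u \<notin> X" using xV yV irr by (auto simp: X_def)
  have XV: "X \<subseteq> V" using xV yV by (auto simp: X_def)
  have uP: "{u} \<in> P" using uX u(1) by (auto simp: P_def)
  have Pfin: "\<And>S. S \<in> P \<Longrightarrow> finite S \<and> S \<subseteq> V \<and> S \<noteq> {}"
    using xV yV by (auto simp: P_def)
  have part: "is_partition V P"
    unfolding is_partition_def
  proof (intro conjI)
    show "\<Union> P = V" using XV by (auto simp: P_def X_def)
    show "{} \<notin> P" by (auto simp: P_def)
    show "\<forall>S\<in>P. \<forall>T\<in>P. S \<noteq> T \<longrightarrow> S \<inter> T = {}"
      using x y dxy by (auto simp: P_def X_def)
  qed
  have loc: "locating_partition V E P"
    unfolding locating_partition_def
  proof (intro conjI part ballI impI)
    fix v w assume vw: "v \<in> V" "w \<in> V" "v \<noteq> w"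
    show "\<exists>S\<in>P. set_dist V E v S \<noteq> set_dist V E w S"
    proof (cases "\<exists>S\<in>P. (v \<in> S \<and> w \<notin> S) \<or> (w \<in> S \<and> v \<notin> S)")
      case True
      then obtain S where S: "S \<in> P" "(v \<in> S \<and> w \<notin> S) \<or> (w \<in> S \<and> v \<notin> S)" by blast
      then show ?thesis using sd_in sd_notin[OF assms(1)] Pfin[OF S(1)] vw by metis
    next
      case False
      have "v \<in> \<Union>P" using part vw(1) by (simp add: is_partition_def)
      then obtain S where "S \<in> P" "v \<in> S" by blast
      with False have "w \<in> S" by blast
      with \<open>S \<in> P\<close> \<open>v \<in> S\<close> vw(3) have "(v \<in> {x1,x2,x3} \<and> w \<notin> {x1,x2,x3}) \<or> (w \<in> {x1,x2,x3} \<and> v \<notin> {x1,x2,x3})"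
        using dxy by (auto simp: P_def)
      moreover have "\<And>z. z \<in> {x1,x2,x3} \<Longrightarrow> gdist V E z u = 1"
        using gdist_adj[OF assms(1)] xV sg unfolding simple_graph_def by blast
      moreover have "\<And>z. z \<in> V \<Longrightarrow> z \<notin> {x1,x2,x3} \<Longrightarrow> z \<in> S \<Longrightarrow> gdist V E z u \<noteq> 1"
      proof
        fix z assume z: "z \<in> V" "z \<notin> {x1,x2,x3}" "z \<in> S" "gdist V E z u = 1"
        then have "E z u" using gdist_1[OF assms(1) _ u(1)] by blast
        then have "E u z" using sg unfolding simple_graph_def by blast
        moreover have "z \<in> {y1,y2,y3}" using z \<open>S \<in> P\<close> \<open>v \<in> S\<close> \<open>w \<in> S\<close> vw(3) by (auto simp: P_def)
        ultimately show False using yV by auto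
      qed
      ultimately show ?thesis using uP vw \<open>v \<in> S\<close> \<open>w \<in> S\<close> by (metis sd_single)
    qed
  qed
  have "card P \<le> 3 + card (V - X)"
  proof -
    have "card P \<le> card {{x1,y1},{x2,y2},{x3,y3}} + card ((\<lambda>v. {v}) ` (V - X))"
      unfolding P_def by (rule card_Un_le)
    moreover have "card {{x1,y1},{x2,y2},{x3,y3}} \<le> 3"
      by (simp add: card_insert_if)
    moreover have "card ((\<lambda>v. {v}) ` (V - X)) \<le> card (V - X)" by (rule card_image_le) (simp add: fin)
    ultimately show ?thesis by linarith
  qed
  moreover have "card X = 6" using x y dxy by (simp add: X_def)
  then have "card (V - X) = n - 6" using XV fin assms(2) by (simp add: card_Diff_subset finite_subset)
  moreover have "partition_dim V E \<le> card P"
    unfolding partition_dim_def using loc by (intro Least_le) blast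
  ultimately show ?thesis using assms(3) by linarith
qed

end
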